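(* Let $U$ be a finite nonempty set, $(T,I,N)$ a residual triplet, $\widetilde{R}$ a $T$-preorder relation on $U$, $u,v\in U$ and $\lambda\in[0,1]$. (i) If the granules $\widetilde{R}^+_{1}(u)$ and $\widetilde{R}^-_{\lambda}(v)$ are $T$-disjoint, then $\widetilde{R}^-_{\lambda}(v)$ is adjacent to $\widetilde{R}^+_{1}(u)$. (ii) If the granules $\widetilde{R}^+_{\lambda}(u)$ and $\widetilde{R}^-_{1}(v)$ are $T$-disjoint, then $\widetilde{R}^+_{\lambda}(u)$ is adjacent to $\widetilde{R}^-_{1}(v)$. That is, every granule is adjacent to every granule with parameter $1$ from which it is $T$-disjoint.
   Context: A residual triplet $(T,I,N)$ consists of a left-continuous $t$-norm $T$, its residual implicator $I(x,y)=\sup\{\beta\in[0,1]: T(x,\beta)\le y\}$ and $N(x)=I(x,0)$. $\widetilde{R}:U\times U\to[0,1]$ is a $T$-preorder if reflexive and $T$-transitive. Granules: $\widetilde{R}^+_\lambda(u)$ is the fuzzy set $w\mapsto T(\widetilde{R}(w,u),\lambda)$ and $\widetilde{R}^-_\lambda(v)$ is $w\mapsto T(\widetilde{R}(v,w),\lambda)$. Fuzzy sets $B,C$ on $U$ are $T$-disjoint if $T(B(w),C(w))=0$ for all $w$. Adjacency: $\widetilde{R}^-_{\lambda_2}(v)$ is adjacent to $\widetilde{R}^+_{\lambda_1}(u)$ if $\lambda_1=I(\lambda_2,N(\widetilde{R}(v,u)))$; $\widetilde{R}^+_{\lambda_1}(u)$ is adjacent to $\widetilde{R}^-_{\lambda_2}(v)$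 if $\lambda_2=I(\lambda_1,N(\widetilde{R}(v,u)))$. *)

theory Defs
  imports "HOL-Analysis.Analysis"
begin

text \<open>t-norms are modelled as real functions whose behaviour on [0,1] matters.\<close>

definition tnorm :: "(real \<Rightarrow> real \<Rightarrow> real) \<Rightarrow> bool" where
  "tnorm T \<longleftrightarrow>
     (\<forall>x\<in>{0..1}. \<forall>y\<in>{0..1}. T x y \<in> {0..1}) \<and>
     (\<forall>x\<in>{0..1}. \<forall>y\<in>{0..1}. T x y = T y x) \<and>
     (\<forall>x\<in>{0..1}. \<forall>y\<in>{0..1}. \<forall>z\<in>{0..1}. T (T x y) z = T x (T y z)) \<and>
     (\<forall>x\<in>{0..1}. \<forall>x'\<in>{0..1}. \<forall>y\<in>{0..1}. x \<le> x' \<longrightarrow> T x y \<le> T x' y) \<and>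
     (\<forall>x\<in>{0..1}. T x 1 = x)"

text \<open>Left-continuity (in the first argument; by commutativity also in the second).\<close>
definition left_continuous_tnorm :: "(real \<Rightarrow> real \<Rightarrow> real) \<Rightarrow> bool" where
  "left_continuous_tnorm T \<longleftrightarrow> tnorm T \<and>
     (\<forall>y\<in>{0..1}. \<forall>x\<in>{0<..1}. ((\<lambda>z. T z y) \<longlongrightarrow> T x y) (at x within {0..<x}))"

definition res_impl :: "(real \<Rightarrow> real \<Rightarrow> real) \<Rightarrow> real \<Rightarrow> real \<Rightarrow> real" where
  "res_impl T x y = Sup {\<beta> \<in> {0..1}. T x \<beta> \<le> y}"

definition res_neg :: "(real \<Rightarrow> real \<Rightarrow> real) \<Rightarrow> real \<Rightarrow> real" where
  "res_neg T x = res_impl T x 0"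

definition t_preorder :: "(real \<Rightarrow> real \<Rightarrow> real) \<Rightarrow> 'a set \<Rightarrow> ('a \<Rightarrow> 'a \<Rightarrow> real) \<Rightarrow> bool" where
  "t_preorder T U R \<longleftrightarrow>
     (\<forall>x\<in>U. \<forall>y\<in>U. R x y \<in> {0..1}) \<and>
     (\<forall>x\<in>U. R x x = 1) \<and>
     (\<forall>x\<in>U. \<forall>y\<in>U. \<forall>z\<in>U. T (R x y) (R y z) \<le> R x z)"

definition gran_plus :: "(real \<Rightarrow> real \<Rightarrow> real) \<Rightarrow> ('a \<Rightarrow> 'a \<Rightarrow> real) \<Rightarrow> real \<Rightarrow> 'a \<Rightarrow> 'a \<Rightarrow> real" where
  "gran_plus T R lam u = (\<lambda>w. T (R w u) lam)"

definition gran_minus :: "(real \<Rightarrow> real \<Rightarrow> real) \<Rightarrow> ('a \<Rightarrow> 'a \<Rightarrow> real) \<Rightarrow> real \<Rightarrow> 'a \<Rightarrow> 'a \<Rightarrow> real" where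
  "gran_minus T R lam v = (\<lambda>w. T (R v w) lam)"

definition t_disjoint :: "(real \<Rightarrow> real \<Rightarrow> real) \<Rightarrow> 'a set \<Rightarrow> ('a \<Rightarrow> real) \<Rightarrow> ('a \<Rightarrow> real) \<Rightarrow> bool" where
  "t_disjoint T U B C \<longleftrightarrow> (\<forall>w\<in>U. T (B w) (C w) = 0)"

definition adj_minus_plus :: "(real \<Rightarrow> real \<Rightarrow> real) \<Rightarrow> ('a \<Rightarrow> 'a \<Rightarrow> real) \<Rightarrow> real \<Rightarrow> 'a \<Rightarrow> real \<Rightarrow> 'a \<Rightarrow> bool" where
  "adj_minus_plus T R lam2 v lam1 u \<longleftrightarrow> lam1 = res_impl T lam2 (res_neg T (R v u))"

definition adj_plus_minus :: "(real \<Rightarrow> real \<Rightarrow> real) \<Rightarrow> ('a \<Rightarrow> 'a \<Rightarrow> real) \<Rightarrow> real \<Rightarrow> 'a \<Rightarrow> real \<Rightarrow> 'a \<Rightarrow> bool" where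
  "adj_plus_minus T R lam1 u lam2 v \<longleftrightarrow> lam2 = res_impl T lam1 (res_neg T (R v u))"

end

theory Submission
  imports Defs
begin

lemma key:
  assumes T: "tnorm T" and a: "a \<in> {0..1}" and lam: "lam \<in> {0..1}" and z: "T a lam = 0"
  shows "res_impl T lam (res_neg T a) = 1"
proof -
  have l1: "T lam 1 = lam" using T lam unfolding tnorm_def by blast
  have "lam \<in> {\<beta> \<in> {0..1}. T a \<beta> \<le> 0}" using lam z by auto
  moreover have "bdd_above {\<beta> \<in> {0..1}. T a \<beta> \<le> (0::real)}"
    by (rule bdd_aboveI[where M=1]) auto
  ultimately have "lam \<le> res_neg T a" unfolding res_neg_def res_impl_def
    by (rule cSup_upper)
  hence "1 \<in> {\<beta> \<in> {0..1}. T lam \<beta> \<le> res_neg T a}" using l1 by auto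
  thus ?thesis unfolding res_impl_def
    by (intro cSup_eq_maximum) auto
qed

theorem proposition5:
  fixes U :: "'a set" and T :: "real \<Rightarrow> real \<Rightarrow> real" and R :: "'a \<Rightarrow> 'a \<Rightarrow> real"
    and u v :: 'a and lam :: real
  assumes "finite U" and "U \<noteq> {}"
    and "left_continuous_tnorm T"
    and "t_preorder T U R"
    and "u \<in> U" and "v \<in> U" and "lam \<in> {0..1}"
  shows "(t_disjoint T U (gran_plus T R 1 u) (gran_minus T R lam v)
            \<longrightarrow> adj_minus_plus T R lam v 1 u)
       \<and> (t_disjoint T U (gran_plus T R lam u) (gran_minus T R 1 v)
            \<longrightarrow> adj_plus_minus T R lam u 1 v)"
proof -
  have T: "tnorm T" using assms(3) unfolding left_continuous_tnorm_def by auto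
  have a: "R v u \<in> {0..1}" and vv: "R v v = 1" using assms(4-6) unfolding t_preorder_def by auto
  have c1b: "T (R v u) 1 = R v u" "T lam 1 = lam"
    using T a assms(7) unfolding tnorm_def by blast+
  have "T 1 lam = T lam 1" using T assms(7) unfolding tnorm_def by (meson atLeastAtMost_iff order_refl zero_le_one)
  hence c1: "T 1 lam = lam" "T (R v u) 1 = R v u" using c1b by auto
  have tin: "T (R v u) lam \<in> {0..1}" using T a assms(7) unfolding tnorm_def by auto
  hence c2: "T (T (R v u) lam) 1 = T (R v u) lam" using T unfolding tnorm_def by blast
  show ?thesis
  proof (intro conjI impI)
    assume "t_disjoint T U (gran_plus T R 1 u) (gran_minus T R lam v)"
    hence "T (T (R v u) 1) (T (R v v) lam) = 0" using assms(6)
      unfolding t_disjoint_def gran_plus_def gran_minus_def by auto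
    hence "T (R v u) lam = 0" using c1 vv by simp
    thus "adj_minus_plus T R lam v 1 u" unfolding adj_minus_plus_def
      using key[OF T a assms(7)] by simp
  next
    assume "t_disjoint T U (gran_plus T R lam u) (gran_minus T R 1 v)"
    hence "T (T (R v u) lam) (T (R v v) 1) = 0" using assms(6)
      unfolding t_disjoint_def gran_plus_def gran_minus_def by auto
    moreover have "T 1 1 = 1" using T unfolding tnorm_def by auto
    ultimately have "T (R v u) lam = 0" using c2 vv by simp
    thus "adj_plus_minus T R lam u 1 v" unfolding adj_plus_minus_def
      using key[OF T a assms(7)] by simp
  qed
qed

end
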